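(* In the two-parallel-path setting with the linear decision rule, suppose $l_v=0$ for all vertices, $m<n$, all initial pheromone levels are positive, the inputs $f_s(t),b_d(t)$ are positive and non-decreasing in $t$, and the initial flows at vertices other than $s,d$ satisfy $f_v(0)\le f_s(0)$, $b_v(0)\le b_d(0)$. Let $T_1=\max_{(u,v)\in E}\log(p_{uv}(0)/(f_s(0)+b_d(0)))/\log(1/\delta)$. Then for every integer $t\ge L+\max(0,T_1)$, $$r_{ss_1}(t+1)\ \ge\ r_{\min}(t)\left(1+\frac{(1-\delta)\big(b_d(t-m+1)-b_d(t-n+1)\big)}{6\big(f_s(t)+b_d(t)\big)}\right).$$
   Context: Model (linear decision rule). Directed graph $G=(V,E)$, source $s$, destination $d$, discrete time; pheromone $p_{uv}(t)$, forward flows $f_v(t)$, backward flows $b_v(t)$; leakages $l_v\in[0,1]$; decay $\delta\in(0,1)$; exogenous inputs $f_s(t),b_d(t)$. Edge flows: $f_{uv}(t)=f_u(t)p_{uv}(t)/\sum_{z:(u,z)\in E}p_{uz}(t)$, $b_{uv}(t)=b_v(t)p_{uv}(t)/\sum_{z:(z,v)\in E}p_{zv}(t)$ (at a vertex with a single outgoing, resp. incoming, edge the whole flow goes along it). Updates: $f_v(t+1)=(1-l_v)\sum_{z:(z,v)\in E}f_{zv}(t)$ for $v\neq s$, $b_u(t+1)=(1-l_u)\sum_{z:(u,z)\in E}b_{uz}(t)$ for $u\ne d$, $p_{uv}(t+1)=\delta(p_{uv}(t)+f_{uv}(t)+b_{uv}(t))$. Two parallel paths: $G$ is the union of directed paths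 $P_1,P_2$ from $s$ to $d$ sharing only $s,d$; $s_1,s_2$ are the successors of $s$ and $d_1,d_2$ the predecessors of $d$ on $P_1,P_2$; $m=\mathrm{len}(P_1)$, $n=\mathrm{len}(P_2)$ (numbers of edges), $L=\max(m,n)$. Potential: $r_{ss_1}(t)=p_{ss_1}(t)/p_{ss_2}(t)$, $r_{d_1d}(t)=p_{d_1d}(t)/p_{d_2d}(t)$, and for $t\ge L$, $r_{\min}(t)=\min\{r_{ss_1}(t-i),\,r_{d_1d}(t-i):0\le i\le L-1\}$. *)

theory Defs
  imports Complex_Main
begin

text \<open>Trajectories: p t u v (pheromone on edge (u,v)), f t v (forward flow), b t v (backward flow).
  The exogenous inputs are f t s and b t d.\<close>

definition fflow :: "('v \<times> 'v) set \<Rightarrow> (nat \<Rightarrow> 'v \<Rightarrow> 'v \<Rightarrow> real) \<Rightarrow> (nat \<Rightarrow> 'v \<Rightarrow> real)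
    \<Rightarrow> nat \<Rightarrow> 'v \<Rightarrow> 'v \<Rightarrow> real" where
  "fflow E p f t u v = f t u * p t u v / (\<Sum>z\<in>{z. (u,z) \<in> E}. p t u z)"

definition bflow :: "('v \<times> 'v) set \<Rightarrow> (nat \<Rightarrow> 'v \<Rightarrow> 'v \<Rightarrow> real) \<Rightarrow> (nat \<Rightarrow> 'v \<Rightarrow> real)
    \<Rightarrow> nat \<Rightarrow> 'v \<Rightarrow> 'v \<Rightarrow> real" where
  "bflow E p b t u v = b t v * p t u v / (\<Sum>z\<in>{z. (z,v) \<in> E}. p t z v)"

definition ant_dynamics :: "('v \<times> 'v) set \<Rightarrow> 'v \<Rightarrow> 'v \<Rightarrow> ('v \<Rightarrow> real) \<Rightarrow> real
    \<Rightarrow> (nat \<Rightarrow> 'v \<Rightarrow> real) \<Rightarrow> (nat \<Rightarrow> 'v \<Rightarrow> real) \<Rightarrow> (nat \<Rightarrow> 'v \<Rightarrow> 'v \<Rightarrow> real) \<Rightarrow> bool" where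
  "ant_dynamics E s d l \<delta> f b p \<longleftrightarrow>
     (\<forall>t v. v \<noteq> s \<longrightarrow> f (Suc t) v = (1 - l v) * (\<Sum>z\<in>{z. (z,v) \<in> E}. fflow E p f t z v)) \<and>
     (\<forall>t u. u \<noteq> d \<longrightarrow> b (Suc t) u = (1 - l u) * (\<Sum>z\<in>{z. (u,z) \<in> E}. bflow E p b t u z)) \<and>
     (\<forall>t u v. (u,v) \<in> E \<longrightarrow>
        p (Suc t) u v = \<delta> * (p t u v + fflow E p f t u v + bflow E p b t u v))"

definition path_edges :: "'v list \<Rightarrow> ('v \<times> 'v) set" where
  "path_edges P = set (zip P (tl P))"

definition two_parallel_paths :: "('v \<times> 'v) set \<Rightarrow> 'v \<Rightarrow> 'v \<Rightarrow> 'v list \<Rightarrow> 'v list \<Rightarrow> bool" where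
  "two_parallel_paths E s d P1 P2 \<longleftrightarrow>
     s \<noteq> d \<and> distinct P1 \<and> distinct P2 \<and>
     P1 \<noteq> [] \<and> P2 \<noteq> [] \<and>
     hd P1 = s \<and> last P1 = d \<and> hd P2 = s \<and> last P2 = d \<and>
     set P1 \<inter> set P2 = {s, d} \<and>
     E = path_edges P1 \<union> path_edges P2"

text \<open>Potential. m = length P1 - 1, n = length P2 - 1 (numbers of edges).
  s_i = P_i ! 1, d_i = P_i ! (len P_i - 1).\<close>
definition r_s :: "(nat \<Rightarrow> 'v \<Rightarrow> 'v \<Rightarrow> real) \<Rightarrow> 'v \<Rightarrow> 'v list \<Rightarrow> 'v list \<Rightarrow> nat \<Rightarrow> real" where
  "r_s p s P1 P2 t = p t s (P1 ! 1) / p t s (P2 ! 1)"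

definition r_d :: "(nat \<Rightarrow> 'v \<Rightarrow> 'v \<Rightarrow> real) \<Rightarrow> 'v \<Rightarrow> 'v list \<Rightarrow> 'v list \<Rightarrow> nat \<Rightarrow> real" where
  "r_d p d P1 P2 t = p t (P1 ! (length P1 - 2)) d / p t (P2 ! (length P2 - 2)) d"

definition r_min :: "(nat \<Rightarrow> 'v \<Rightarrow> 'v \<Rightarrow> real) \<Rightarrow> 'v \<Rightarrow> 'v \<Rightarrow> 'v list \<Rightarrow> 'v list \<Rightarrow> nat \<Rightarrow> real" where
  "r_min p s d P1 P2 t =
     (let L = max (length P1 - 1) (length P2 - 1) in
      Min ((\<lambda>i. r_s p s P1 P2 (t - i)) ` {..<L} \<union> (\<lambda>i. r_d p d P1 P2 (t - i)) ` {..<L}))"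

end

theory Submission
  imports Defs
begin

lemma pe_iff: "(a,c) \<in> path_edges P \<longleftrightarrow> (\<exists>i. Suc i < length P \<and> a = P!i \<and> c = P!Suc i)"
proof
  assume "(a,c) \<in> path_edges P"
  then obtain i where "i < length P - 1" "a = P!i" "c = P!Suc i"
    unfolding path_edges_def by (auto simp: set_zip nth_tl)
  then show "\<exists>i. Suc i < length P \<and> a = P!i \<and> c = P!Suc i" by (intro exI[of _ i]) auto
next
  assume "\<exists>i. Suc i < length P \<and> a = P!i \<and> c = P!Suc i"
  then obtain i where "Suc i < length P" "a = P!i" "c = P!Suc i" by blast
  then show "(a,c) \<in> path_edges P" unfolding path_edges_def set_zip
    by (auto simp: nth_tl intro!: exI[of _ i])
qed

lemma pe_finite: "finite (path_edges P)"
  unfolding path_edges_def by simp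

lemma tpp_sym: "two_parallel_paths E s d P1 P2 \<Longrightarrow> two_parallel_paths E s d P2 P1"
  unfolding two_parallel_paths_def by auto

lemma nth_inj: "distinct P \<Longrightarrow> i < length P \<Longrightarrow> j < length P \<Longrightarrow> P!i = P!j \<Longrightarrow> i = j"
  using nth_eq_iff_index_eq by blast

lemma tpp_basic:
  assumes G: "two_parallel_paths E s d P1 P2"
  shows "length P1 \<ge> 2" "P1!0 = s" "P1!(length P1 - 1) = d" "distinct P1" "finite E"
    "set P1 \<inter> set P2 = {s,d}" "E = path_edges P1 \<union> path_edges P2" "s \<noteq> d"
proof -
  have h: "s \<noteq> d" "distinct P1" "P1 \<noteq> []" "hd P1 = s" "last P1 = d" "set P1 \<inter> set P2 = {s,d}"
    "E = path_edges P1 \<union> path_edges P2"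
    using G unfolding two_parallel_paths_def by auto
  show a: "P1!0 = s" using h by (simp add: hd_conv_nth)
  show c: "P1!(length P1 - 1) = d" using h by (simp add: last_conv_nth)
  show "length P1 \<ge> 2"
  proof (rule ccontr)
    assume "\<not> 2 \<le> length P1"
    moreover have "length P1 \<noteq> 0" using h by simp
    ultimately have "length P1 - 1 = 0" by simp
    then show False using a c h by simp
  qed
  show "distinct P1" "set P1 \<inter> set P2 = {s,d}" "E = path_edges P1 \<union> path_edges P2" "s \<noteq> d" using h by auto
  show "finite E" using h by (simp add: pe_finite)
qed

lemma tpp_edge:
  assumes G: "two_parallel_paths E s d P1 P2" and e: "(u,v) \<in> E"
  shows "u \<in> set P1 \<union> set P2" "v \<in> set P1 \<union> set P2" "u \<noteq> d" "v \<noteq> s"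
proof -
  note b1 = tpp_basic[OF G] and b2 = tpp_basic[OF tpp_sym[OF G]]
  have "(u,v) \<in> path_edges P1 \<or> (u,v) \<in> path_edges P2" using e b1 by auto
  then have "\<exists>P. (P = P1 \<or> P = P2) \<and> (u,v) \<in> path_edges P" by blast
  then obtain P where P: "P = P1 \<or> P = P2" "(u,v) \<in> path_edges P" by blast
  have bb: "P!0 = s" "P!(length P - 1) = d" "distinct P" "length P \<ge> 2" using P b1 b2 by auto
  obtain i where i: "Suc i < length P" "u = P!i" "v = P!Suc i" using P pe_iff by metis
  have "u \<in> set P" "v \<in> set P" using i by auto
  then show "u \<in> set P1 \<union> set P2" "v \<in> set P1 \<union> set P2" using P by auto
  show "u \<noteq> d"
  proof
    assume "u = d"
    then have "i = length P - 1" using nth_inj[OF bb(3), of i "length P - 1"] i bb by auto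
    then show False using i by simp
  qed
  show "v \<noteq> s"
  proof
    assume "v = s"
    moreover have "P \<noteq> []" "0 < length P" using bb by auto
    ultimately have "Suc i = 0" using nth_inj[OF bb(3), of "Suc i" 0] i bb by auto
    then show False by simp
  qed
qed

lemma tpp_notin:
  assumes G: "two_parallel_paths E s d P1 P2" and k: "0 < k" "Suc k < length P1"
  shows "P1!k \<notin> set P2"
proof
  note b1 = tpp_basic[OF G]
  assume a: "P1!k \<in> set P2"
  have "P1!k \<in> set P1" using k by simp
  then have "P1!k \<in> set P1 \<inter> set P2" using a by blast
  then have "P1!k \<in> {s,d}" using b1(6) by simp
  then have "P1!k = P1!0 \<or> P1!k = P1!(length P1 - 1)" using b1(2,3) by auto
  moreover have "k < length P1" "0 < length P1" "length P1 - 1 < length P1" using k by auto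
  ultimately have "k = 0 \<or> k = length P1 - 1" using nth_inj[OF b1(4)] by blast
  then show False using k by auto
qed

lemma tpp_out_int:
  assumes G: "two_parallel_paths E s d P1 P2" and k: "0 < k" "Suc k < length P1"
  shows "{z. (P1!k, z) \<in> E} = {P1!Suc k}"
proof -
  note b1 = tpp_basic[OF G]
  note notin = tpp_notin[OF G k]
  have "(P1!k, z) \<in> E \<longleftrightarrow> z = P1!Suc k" for z
  proof
    assume "(P1!k, z) \<in> E"
    then have "(P1!k, z) \<in> path_edges P1 \<or> (P1!k, z) \<in> path_edges P2" using b1(7) by simp
    moreover have "(P1!k, z) \<notin> path_edges P2"
    proof
      assume "(P1!k, z) \<in> path_edges P2"
      then obtain i where "Suc i < length P2" "P1!k = P2!i" unfolding pe_iff by blast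
      then have "P1!k \<in> set P2" by simp
      then show False using notin by simp
    qed
    ultimately have "(P1!k, z) \<in> path_edges P1" by simp
    then obtain i where i: "Suc i < length P1" "P1!k = P1!i" "z = P1!Suc i" unfolding pe_iff by blast
    have "k < length P1" "i < length P1" using k i by auto
    then have "k = i" using nth_inj[OF b1(4)] i by blast
    then show "z = P1!Suc k" using i by simp
  next
    assume z: "z = P1!Suc k"
    have "(P1!k, P1!Suc k) \<in> path_edges P1" unfolding pe_iff using k by blast
    then show "(P1!k, z) \<in> E" using b1(7) z by simp
  qed
  then show ?thesis by auto
qed

lemma tpp_in_int:
  assumes G: "two_parallel_paths E s d P1 P2" and k: "0 < k" "Suc k < length P1"
  shows "{z. (z, P1!k) \<in> E} = {P1!(k - 1)}"
proof -
  note b1 = tpp_basic[OF G]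
  note notin = tpp_notin[OF G k]
  have "(z, P1!k) \<in> E \<longleftrightarrow> z = P1!(k - 1)" for z
  proof
    assume "(z, P1!k) \<in> E"
    then have "(z, P1!k) \<in> path_edges P1 \<or> (z, P1!k) \<in> path_edges P2" using b1(7) by simp
    moreover have "(z, P1!k) \<notin> path_edges P2"
    proof
      assume "(z, P1!k) \<in> path_edges P2"
      then obtain i where "Suc i < length P2" "P1!k = P2!Suc i" unfolding pe_iff by blast
      then have "P1!k \<in> set P2" by simp
      then show False using notin by simp
    qed
    ultimately have "(z, P1!k) \<in> path_edges P1" by simp
    then obtain i where i: "Suc i < length P1" "P1!k = P1!Suc i" "z = P1!i" unfolding pe_iff by blast
    have "k < length P1" "Suc i < length P1" using k i by auto
    then have "k = Suc i" using nth_inj[OF b1(4)] i by blast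
    then show "z = P1!(k - 1)" using i by simp
  next
    assume z: "z = P1!(k - 1)"
    have "Suc (k - 1) < length P1" "P1!k = P1!Suc (k-1)" using k by auto
    then have "(P1!(k - 1), P1!k) \<in> path_edges P1" unfolding pe_iff by blast
    then show "(z, P1!k) \<in> E" using b1(7) z by simp
  qed
  then show ?thesis by auto
qed

lemma tpp_out_s:
  assumes G: "two_parallel_paths E s d P1 P2"
  shows "{z. (s, z) \<in> E} = {P1!1, P2!1}"
proof -
  note b1 = tpp_basic[OF G] and b2 = tpp_basic[OF tpp_sym[OF G]]
  have a: "(s,z) \<in> path_edges P \<longleftrightarrow> z = P!1" if "P!0 = s" "distinct P" "length P \<ge> 2" for P z
  proof
    assume "(s,z) \<in> path_edges P"
    then obtain i where i: "Suc i < length P" "s = P!i" "z = P!Suc i" using pe_iff by metis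
    moreover have "0 < length P" using that by auto
    ultimately have "i = 0" using nth_inj[OF that(2), of i 0] that by auto
    then show "z = P!1" using i by simp
  next
    assume "z = P!1" then show "(s,z) \<in> path_edges P" using that pe_iff[of s z P]
      by (intro iffD2[OF pe_iff] exI[of _ 0]) auto
  qed
  show ?thesis using a[of P1] a[of P2] b1 b2 by auto
qed

lemma tpp_in_d:
  assumes G: "two_parallel_paths E s d P1 P2"
  shows "{z. (z, d) \<in> E} = {P1!(length P1 - 2), P2!(length P2 - 2)}"
proof -
  note b1 = tpp_basic[OF G] and b2 = tpp_basic[OF tpp_sym[OF G]]
  have a: "(z,d) \<in> path_edges P \<longleftrightarrow> z = P!(length P - 2)" if "P!(length P - 1) = d" "distinct P" "length P \<ge> 2" for P z
  proof
    assume "(z,d) \<in> path_edges P"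
    then obtain i where i: "Suc i < length P" "z = P!i" "d = P!Suc i" using pe_iff by metis
    then have "Suc i = length P - 1" using nth_inj[OF that(2), of "Suc i" "length P - 1"] that by auto
    then have "i = length P - 2" by simp
    then show "z = P!(length P - 2)" using i by simp
  next
    assume z: "z = P!(length P - 2)"
    have "Suc (length P - 2) = length P - 1" "Suc (length P - 2) < length P" using that by auto
    then show "(z,d) \<in> path_edges P" using that z pe_iff by metis
  qed
  show ?thesis using a[of P1] a[of P2] b1 b2 by auto
qed

lemma tpp_distinct:
  assumes G: "two_parallel_paths E s d P1 P2" and lt: "length P1 < length P2"
  shows "P1!1 \<noteq> P2!1" "P1!(length P1 - 2) \<noteq> P2!(length P2 - 2)"
proof -
  note b1 = tpp_basic[OF G] and b2 = tpp_basic[OF tpp_sym[OF G]]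
  show "P1!1 \<noteq> P2!1"
  proof
    assume eq: "P1!1 = P2!1"
    have l: "1 < length P1" "1 < length P2" using b1 b2 by auto
    have "P1!1 \<in> set P1 \<inter> set P2" using eq l by (metis IntI nth_mem)
    then have "P1!1 \<in> {s,d}" using b1 by auto
    moreover have "P1!1 \<noteq> s" using nth_inj[OF b1(4) l(1), of 0] l b1 by fastforce
    moreover have "P2!1 \<noteq> s" using nth_inj[OF b2(4) l(2), of 0] l b2 by fastforce
    ultimately have "P1!1 = d" "P2!1 = d" using eq by auto
    then have "1 = length P1 - 1" "1 = length P2 - 1"
      using nth_inj[OF b1(4), of 1 "length P1 - 1"] nth_inj[OF b2(4), of 1 "length P2 - 1"] l b1 b2 by auto
    then show False using lt by simp
  qed
  show "P1!(length P1 - 2) \<noteq> P2!(length P2 - 2)"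
  proof
    assume eq: "P1!(length P1 - 2) = P2!(length P2 - 2)"
    have l: "length P1 - 2 < length P1" "length P2 - 2 < length P2" using b1 b2 by auto
    have "P1!(length P1 - 2) \<in> set P1 \<inter> set P2" using eq l by (metis IntI nth_mem)
    then have "P1!(length P1 - 2) \<in> {s,d}" using b1 by auto
    moreover have "P1!(length P1 - 2) \<noteq> d"
      using nth_inj[OF b1(4), of "length P1 - 2" "length P1 - 1"] l b1 by auto
    moreover have "P2!(length P2 - 2) \<noteq> d"
      using nth_inj[OF b2(4), of "length P2 - 2" "length P2 - 1"] l b2 by auto
    ultimately have "P1!(length P1 - 2) = s" "P2!(length P2 - 2) = s" using eq by auto
    moreover have "0 < length P1" "0 < length P2" using b1 b2 by auto
    ultimately have "length P1 - 2 = 0" "length P2 - 2 = 0"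
      using nth_inj[OF b1(4) l(1), of 0] nth_inj[OF b2(4) l(2), of 0] b1(2) b2(2) by auto
    then show False using lt b1 by simp
  qed
qed

locale ant0 =
  fixes E :: "('v \<times> 'v) set" and s d :: 'v and P1 P2 :: "'v list" and \<delta> :: real
    and f b :: "nat \<Rightarrow> 'v \<Rightarrow> real" and p :: "nat \<Rightarrow> 'v \<Rightarrow> 'v \<Rightarrow> real"
  assumes G: "two_parallel_paths E s d P1 P2"
    and delta: "0 < \<delta>" "\<delta> < 1"
    and dynf: "\<And>t v. v \<noteq> s \<Longrightarrow> f (Suc t) v = (\<Sum>z\<in>{z. (z,v) \<in> E}. fflow E p f t z v)"
    and dynb: "\<And>t u. u \<noteq> d \<Longrightarrow> b (Suc t) u = (\<Sum>z\<in>{z. (u,z) \<in> E}. bflow E p b t u z)"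
    and dynp: "\<And>t u v. (u,v) \<in> E \<Longrightarrow>
        p (Suc t) u v = \<delta> * (p t u v + fflow E p f t u v + bflow E p b t u v)"
    and p0: "\<And>u v. (u,v) \<in> E \<Longrightarrow> p 0 u v > 0"
    and fs_pos: "\<And>t. f t s > 0"
    and bd_pos: "\<And>t. b t d > 0" and bd_mono: "mono (\<lambda>t. b t d)"
    and f0: "\<And>v. v \<in> (set P1 \<union> set P2) - {s, d} \<Longrightarrow> 0 \<le> f 0 v"
    and b0: "\<And>v. v \<in> (set P1 \<union> set P2) - {s, d} \<Longrightarrow> 0 \<le> b 0 v \<and> b 0 v \<le> b 0 d"

lemma ant0_sym: assumes "ant0 E s d P1 P2 \<delta> f b p" shows "ant0 E s d P2 P1 \<delta> f b p"
proof -
  have u: "set P2 \<union> set P1 = set P1 \<union> set P2" by auto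
  interpret a: ant0 E s d P1 P2 \<delta> f b p by (rule assms)
  show ?thesis
    apply unfold_locales
    apply (rule tpp_sym[OF a.G])
    apply (rule a.delta(1))
    apply (rule a.delta(2))
    apply (erule a.dynf)
    apply (erule a.dynb)
    apply (erule a.dynp)
    apply (erule a.p0)
    apply (rule a.fs_pos)
    apply (rule a.bd_pos)
    apply (rule a.bd_mono)
    subgoal for v using a.f0[of v] u by simp
    subgoal for v using a.b0[of v] u by simp
    done
qed

context ant0
begin

lemma finE: "finite E" using tpp_basic[OF G] by simp

lemma fin_in: "finite {z. (z,v) \<in> E}"
  by (rule finite_subset[of _ "fst ` E"]) (auto simp: finE intro: rev_image_eqI)

lemma fin_out: "finite {z. (v,z) \<in> E}"
  by (rule finite_subset[of _ "snd ` E"]) (auto simp: finE intro: rev_image_eqI)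

lemma int_out:
  assumes v: "v \<in> (set P1 \<union> set P2) - {s, d}"
  shows "\<exists>w. {z. (v,z) \<in> E} = {w}"
proof -
  have g: "\<exists>w. {z. (v,z) \<in> E} = {w}" if GG: "two_parallel_paths E s d Q1 Q2" and vq: "v \<in> set Q1" "v \<noteq> s" "v \<noteq> d" for Q1 Q2
  proof -
    note bq = tpp_basic[OF GG]
    obtain k where k: "k < length Q1" "v = Q1!k" using vq(1) by (auto simp: in_set_conv_nth)
    have "k \<noteq> 0"
    proof
      assume "k = 0" then show False using k vq bq(2) by simp
    qed
    moreover have "k \<noteq> length Q1 - 1" using k vq bq(3) by auto
    ultimately have "0 < k" "Suc k < length Q1" using k by auto
    then show ?thesis using tpp_out_int[OF GG] k by blast
  qed
  show ?thesis using v g[OF G] g[OF tpp_sym[OF G]] by auto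
qed

lemma fflow_nonneg:
  assumes "\<And>u v. (u,v) \<in> E \<Longrightarrow> p t u v > 0" "f t u \<ge> 0" "(u,v) \<in> E"
  shows "fflow E p f t u v \<ge> 0"
proof -
  have "(\<Sum>z\<in>{z. (u,z) \<in> E}. p t u z) \<ge> 0" using assms(1) by (intro sum_nonneg) (auto intro: less_imp_le)
  then show ?thesis unfolding fflow_def using assms by (intro divide_nonneg_nonneg mult_nonneg_nonneg) (auto intro: less_imp_le)
qed

lemma bflow_le:
  assumes pos: "\<And>u v. (u,v) \<in> E \<Longrightarrow> p t u v > 0" and bv: "b t v \<ge> 0" and e: "(u,v) \<in> E"
  shows "0 \<le> bflow E p b t u v" "bflow E p b t u v \<le> b t v"
proof -
  let ?S = "\<Sum>z\<in>{z. (z,v) \<in> E}. p t z v"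
  have le: "p t u v \<le> ?S" using e pos by (intro member_le_sum fin_in) (auto intro: less_imp_le)
  have pp: "p t u v > 0" using pos e by auto
  then have Sp: "?S > 0" using le by linarith
  have r: "p t u v / ?S \<le> 1" using le Sp by simp
  have "bflow E p b t u v = b t v * (p t u v / ?S)" unfolding bflow_def by simp
  moreover have "b t v * (p t u v / ?S) \<le> b t v * 1" using r bv by (intro mult_left_mono) auto
  moreover have "0 \<le> b t v * (p t u v / ?S)" using bv pp Sp by simp
  ultimately show "0 \<le> bflow E p b t u v" "bflow E p b t u v \<le> b t v" by auto
qed

lemma inv: "(\<forall>u v. (u,v) \<in> E \<longrightarrow> p t u v > 0) \<and>
   (\<forall>v \<in> (set P1 \<union> set P2) - {s, d}. 0 \<le> f t v \<and> 0 \<le> b t v \<and> b t v \<le> b t d)"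
proof (induction t)
  case 0
  then show ?case using p0 f0 b0 by auto
next
  case (Suc t)
  have pos: "\<And>u v. (u,v) \<in> E \<Longrightarrow> p t u v > 0" using Suc by auto
  have fu: "f t u \<ge> 0" if "(u,v) \<in> E" for u v
  proof -
    note ee = tpp_edge[OF G that]
    show ?thesis proof (cases "u = s")
      case True then show ?thesis using fs_pos less_imp_le by auto
    next
      case False then show ?thesis using ee Suc by auto
    qed
  qed
  have bv: "b t v \<ge> 0 \<and> b t v \<le> b t d" if "(u,v) \<in> E" for u v
  proof -
    note ee = tpp_edge[OF G that]
    show ?thesis proof (cases "v = d")
      case True then show ?thesis using bd_pos less_imp_le by auto
    next
      case False then show ?thesis using ee Suc by auto
    qed
  qed
  have A: "\<forall>u v. (u,v) \<in> E \<longrightarrow> p (Suc t) u v > 0"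
  proof (intro allI impI)
    fix u v assume e: "(u,v) \<in> E"
    have "fflow E p f t u v \<ge> 0" using fflow_nonneg[OF pos fu[OF e] e] .
    moreover have "bflow E p b t u v \<ge> 0" using bflow_le(1)[OF pos _ e] bv[OF e] by auto
    ultimately show "p (Suc t) u v > 0" using dynp[OF e] pos[OF e] delta by simp
  qed
  have B: "0 \<le> f (Suc t) v \<and> 0 \<le> b (Suc t) v \<and> b (Suc t) v \<le> b (Suc t) d"
    if v: "v \<in> (set P1 \<union> set P2) - {s, d}" for v
  proof -
    have "f (Suc t) v = (\<Sum>z\<in>{z. (z,v) \<in> E}. fflow E p f t z v)" using dynf v by auto
    also have "\<dots> \<ge> 0" using fflow_nonneg[OF pos] fu by (intro sum_nonneg) auto
    finally have 1: "0 \<le> f (Suc t) v" .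
    obtain w where w: "{z. (v,z) \<in> E} = {w}" using int_out[OF v] by blast
    have e: "(v,w) \<in> E" using w by auto
    have "b (Suc t) v = bflow E p b t v w" using dynb[of v t] v w by auto
    then have "0 \<le> b (Suc t) v" "b (Suc t) v \<le> b t w" using bflow_le[OF pos _ e] bv[OF e] by auto
    moreover have "b t d \<le> b (Suc t) d" using bd_mono by (simp add: mono_def)
    ultimately show ?thesis using 1 bv[OF e] by auto
  qed
  show ?case using A B by blast
qed

lemma ppos: "(u,v) \<in> E \<Longrightarrow> p t u v > 0" using inv by blast

lemma bnd: "(u,v) \<in> E \<Longrightarrow> 0 \<le> b t v \<and> b t v \<le> b t d"
proof -
  assume e: "(u,v) \<in> E"
  note ee = tpp_edge[OF G e]
  show ?thesis proof (cases "v = d")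
    case True then show ?thesis using bd_pos less_imp_le by auto
  next
    case False then show ?thesis using ee inv by auto
  qed
qed

lemma bflow_bd: "(u,v) \<in> E \<Longrightarrow> 0 \<le> bflow E p b t u v \<and> bflow E p b t u v \<le> b t d"
  using bflow_le[OF ppos, of t v u] bnd[of u v t] by fastforce

definition "hh t = bflow E p b t (P1!(length P1 - 2)) d"

lemma prop_gen:
  assumes j: "j \<le> length P1 - 2" and tj: "j \<le> t"
  shows "bflow E p b t (P1!(length P1 - 2 - j)) (P1!(length P1 - 1 - j)) = hh (t - j)"
  using j tj
proof (induction j arbitrary: t)
  case 0
  then show ?case using tpp_basic(3)[OF G] by (simp add: hh_def)
next
  case (Suc j)
  note bq = tpp_basic[OF G]
  define k1 where "k1 = length P1 - 2 - j"
  have k1: "0 < k1" "Suc k1 < length P1" using Suc.prems bq unfolding k1_def by auto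
  have e1: "length P1 - 1 - Suc j = k1" "length P1 - 2 - Suc j = k1 - 1" "length P1 - 1 - j = Suc k1"
    using Suc.prems bq unfolding k1_def by auto
  obtain t' where t': "t = Suc t'" "j \<le> t'" using Suc.prems by (cases t) auto
  have ein: "(P1!(k1 - 1), P1!k1) \<in> E" using tpp_in_int[OF G k1] by auto
  have "bflow E p b t (P1!(k1 - 1)) (P1!k1) = b t (P1!k1) * p t (P1!(k1 - 1)) (P1!k1) / p t (P1!(k1 - 1)) (P1!k1)"
    unfolding bflow_def using tpp_in_int[OF G k1] by simp
  also have "\<dots> = b t (P1!k1)" using ppos[OF ein, of t] by simp
  also have "\<dots> = bflow E p b t' (P1!k1) (P1!Suc k1)"
  proof -
    have o: "{z. (P1!k1, z) \<in> E} = {P1!Suc k1}" using tpp_out_int[OF G k1] .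
    have "P1!k1 \<noteq> d" using tpp_edge(3)[OF G, of "P1!k1" "P1!Suc k1"] o by auto
    then show ?thesis using dynb[of "P1!k1" t'] o t' by simp
  qed
  also have "\<dots> = hh (t' - j)" using Suc.IH[of t'] Suc.prems t' e1 by simp
  finally show ?case using e1 t' by simp
qed

lemma prop_s:
  assumes "length P1 - 2 \<le> t"
  shows "bflow E p b t s (P1!1) = hh (t - (length P1 - 2))"
proof -
  note bq = tpp_basic[OF G]
  have "length P1 - 2 - (length P1 - 2) = 0" "length P1 - 1 - (length P1 - 2) = 1" using bq by auto
  then show ?thesis using prop_gen[of "length P1 - 2" t] assms bq(2) by simp
qed

end

lemma alg_main:
  fixes x y F X1 Y1 X2 Y2 B1 B2 S \<delta> r Q :: real
  assumes pos: "x > 0" "y > 0" "X1 > 0" "Y1 > 0" "X2 > 0" "Y2 > 0" "r > 0"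
    and F: "F \<ge> 0" and B2: "B2 \<ge> 0" and B12: "B2 \<le> B1"
    and rx: "r * y \<le> x" and r1: "r * Y1 \<le> X1" and r2: "r * Y2 \<le> X2"
    and d: "0 < \<delta>" "\<delta> < 1"
    and Q: "x + y \<le> 4 * S / (1 - \<delta>)" and FB: "F + B2 \<le> S"
  defines "N \<equiv> x + F * x / (x + y) + B1 * X1 / (X1 + Y1)"
    and "D \<equiv> y + F * y / (x + y) + B2 * Y2 / (X2 + Y2)"
  shows "N / D \<ge> r * (1 + (1 - \<delta>) * (B1 - B2) / (6 * S))"
proof -
  have xy: "x + y > 0" using pos by simp
  have nz: "1 + r \<noteq> 0" "X1 + Y1 \<noteq> 0" "X2 + Y2 \<noteq> 0" "x + y \<noteq> 0" "1 + r > 0" using pos by auto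
  have a1: "F * x / (x + y) - r * (F * y / (x + y)) = F * (x - r * y) / (x + y)"
    by (simp add: right_diff_distrib diff_divide_distrib mult.left_commute)
  have a2: "F * (x - r * y) / (x + y) \<ge> 0" using F rx xy by simp
  have a3: "X1 / (X1 + Y1) \<ge> r / (1 + r)"
    using pos r1 by (simp add: field_simps)
  have a4: "Y2 / (X2 + Y2) \<le> 1 / (1 + r)"
    using pos r2 by (simp add: field_simps)
  have a5: "B1 * X1 / (X1 + Y1) \<ge> B1 * (r / (1 + r))"
  proof -
    have "B1 * (r / (1 + r)) \<le> B1 * (X1 / (X1 + Y1))" using a3 B2 B12 by (intro mult_left_mono) auto
    then show ?thesis by simp
  qed
  have a6: "r * (B2 * Y2 / (X2 + Y2)) \<le> r * (B2 * (1 / (1 + r)))"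
  proof -
    have "B2 * (Y2 / (X2 + Y2)) \<le> B2 * (1 / (1 + r))" using a4 B2 by (intro mult_left_mono) auto
    then have "r * (B2 * (Y2 / (X2 + Y2))) \<le> r * (B2 * (1 / (1 + r)))" by (rule mult_left_mono) (use pos in linarith)
    then show ?thesis by simp
  qed
  have ND: "N - r * D \<ge> r * (B1 - B2) / (1 + r)"
  proof -
    have "N - r * D = (x - r * y) + F * (x - r * y) / (x + y) + B1 * X1 / (X1 + Y1) - r * (B2 * Y2 / (X2 + Y2))"
      unfolding N_def D_def using a1 by (simp add: algebra_simps)
    also have "\<dots> \<ge> 0 + 0 + B1 * (r / (1 + r)) - r * (B2 * (1 / (1 + r)))"
      using rx a2 a5 a6 by linarith
    also have "0 + 0 + B1 * (r / (1 + r)) - r * (B2 * (1 / (1 + r))) = r * (B1 - B2) / (1 + r)"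
      by (simp add: right_diff_distrib diff_divide_distrib mult.commute mult.left_commute)
    finally show ?thesis .
  qed
  have Dpos: "D > 0" unfolding D_def using pos F B2 xy by (intro add_pos_nonneg) auto
  have Dbound: "(1 + r) * D \<le> x + y + F + B2"
  proof -
    have c: "(1 + r) * y \<le> x + y" using rx by (simp add: algebra_simps)
    moreover have "(1 + r) * (F * y / (x + y)) \<le> F"
    proof -
      have "(1 + r) * y / (x + y) \<le> 1" using c xy by simp
      then have "F * ((1 + r) * y / (x + y)) \<le> F * 1" using F by (intro mult_left_mono) auto
      then show ?thesis by (simp add: field_simps)
    qed
    moreover have "(1 + r) * (B2 * Y2 / (X2 + Y2)) \<le> B2"
    proof -
      have "(1 + r) * (Y2 / (X2 + Y2)) \<le> (1 + r) * (1 / (1 + r))" using a4 pos by (intro mult_left_mono) auto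
      then have "(1 + r) * Y2 / (X2 + Y2) \<le> 1" using pos by simp
      then have "B2 * ((1 + r) * Y2 / (X2 + Y2)) \<le> B2 * 1" using B2 by (intro mult_left_mono) auto
      then show ?thesis by (simp add: field_simps)
    qed
    ultimately show ?thesis unfolding D_def by (simp add: algebra_simps)
  qed
  have Spos: "S > 0"
  proof -
    have "0 < x + y" using xy .
    also have "\<dots> \<le> 4 * S / (1 - \<delta>)" using Q .
    finally show ?thesis using d by (simp add: zero_less_divide_iff)
  qed
  have key: "(1 + r) * D * (1 - \<delta>) \<le> 6 * S"
  proof -
    have "(x + y) * (1 - \<delta>) \<le> 4 * S" using Q d by (simp add: field_simps)
    moreover have "(F + B2) * (1 - \<delta>) \<le> S * 1" using FB d F B2 by (intro mult_mono) auto
    moreover have "(1 + r) * D * (1 - \<delta>) \<le> (x + y + F + B2) * (1 - \<delta>)" using Dbound d by (intro mult_right_mono) auto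
    moreover have "(x + y + F + B2) * (1 - \<delta>) = (x + y) * (1 - \<delta>) + (F + B2) * (1 - \<delta>)"
      by (simp add: algebra_simps)
    ultimately show ?thesis using Spos by linarith
  qed
  have "r * (1 + (1 - \<delta>) * (B1 - B2) / (6 * S)) = r + r * (B1 - B2) * ((1 - \<delta>) / (6 * S))"
    by (simp add: field_simps)
  also have "\<dots> \<le> r + r * (B1 - B2) * (1 / ((1 + r) * D))"
  proof -
    have K: "0 < (1 + r) * D" using Dpos nz by simp
    have "(1 - \<delta>) * ((1 + r) * D) \<le> 6 * S" using key by (simp add: mult.commute mult.left_commute)
    then have "(1 - \<delta>) * ((1 + r) * D) / (6 * S) \<le> 1" using Spos by (simp add: pos_divide_le_eq)
    then have "(1 - \<delta>) / (6 * S) * ((1 + r) * D) \<le> 1" by simp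
    then have "(1 - \<delta>) / (6 * S) \<le> 1 / ((1 + r) * D)" by (subst pos_le_divide_eq[OF K])
    moreover have "r * (B1 - B2) \<ge> 0" using pos B12 by simp
    ultimately have "r * (B1 - B2) * ((1 - \<delta>) / (6 * S)) \<le> r * (B1 - B2) * (1 / ((1 + r) * D))"
      by (rule mult_left_mono)
    then show ?thesis by (rule add_left_mono)
  qed
  also have "\<dots> = (r * D + r * (B1 - B2) / (1 + r)) / D"
  proof -
    have "D + D * r > 0" using Dpos pos by (simp add: add_pos_pos)
    then have "D + D * r \<noteq> 0" "D \<noteq> 0" "1 + r \<noteq> 0" using Dpos nz by auto
    then show ?thesis by (simp add: field_simps)
  qed
  also have "\<dots> \<le> N / D" using ND Dpos by (simp add: divide_right_mono)
  finally show ?thesis .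
qed

lemma T1_bound:
  fixes \<delta> x0 S0 :: real
  assumes d: "0 < \<delta>" "\<delta> < 1" and x0: "x0 > 0" and S0: "S0 > 0"
    and h: "ln (x0 / S0) / ln (1 / \<delta>) \<le> real t"
  shows "\<delta> ^ t * x0 \<le> S0"
proof -
  have lp: "ln (1 / \<delta>) > 0" using d by (simp add: ln_div)
  have "ln (x0 / S0) \<le> real t * ln (1 / \<delta>)" using h lp by (simp add: pos_divide_le_eq)
  then have "exp (ln (x0 / S0)) \<le> exp (real t * ln (1 / \<delta>))" by simp
  moreover have "exp (ln (x0 / S0)) = x0 / S0" using x0 S0 by simp
  moreover have "exp (real t * ln (1 / \<delta>)) = (1 / \<delta>) ^ t"
    using d by (simp add: exp_of_nat_mult)
  ultimately have "x0 / S0 \<le> (1 / \<delta>) ^ t" by simp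
  then have "x0 \<le> S0 * (1 / \<delta>) ^ t" using S0 by (simp add: pos_divide_le_eq mult.commute)
  then have "\<delta> ^ t * x0 \<le> \<delta> ^ t * (S0 * (1 / \<delta>) ^ t)" using d by (intro mult_left_mono) auto
  also have "\<delta> ^ t * (S0 * (1 / \<delta>) ^ t) = S0"
  proof -
    have "\<delta> ^ t * (1 / \<delta>) ^ t = (\<delta> * (1 / \<delta>)) ^ t" by (rule power_mult_distrib[symmetric])
    also have "\<dots> = 1" using d by simp
    finally have e: "\<delta> ^ t * (1 / \<delta>) ^ t = 1" .
    show ?thesis by (metis e mult.left_commute mult_1_right)
  qed
  finally show ?thesis .
qed

lemma Q_bound:
  fixes Q S :: "nat \<Rightarrow> real" and \<delta> :: real
  assumes d: "0 < \<delta>" "\<delta> < 1"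
    and step: "\<And>\<tau>. Q (Suc \<tau>) \<le> \<delta> * Q \<tau> + 2 * \<delta> * S \<tau>"
    and Sm: "\<And>\<tau>. S \<tau> \<le> S (Suc \<tau>)" and Sp: "\<And>\<tau>. S \<tau> \<ge> 0"
  shows "Q \<tau> \<le> \<delta> ^ \<tau> * Q 0 + 2 * S \<tau> / (1 - \<delta>)"
proof (induction \<tau>)
  case 0
  have "0 \<le> 2 * S 0 / (1 - \<delta>)" using Sp d by simp
  then show ?case by simp
next
  case (Suc \<tau>)
  have "Q (Suc \<tau>) \<le> \<delta> * (\<delta> ^ \<tau> * Q 0 + 2 * S \<tau> / (1 - \<delta>)) + 2 * \<delta> * S \<tau>"
    using step[of \<tau>] Suc d by (smt (verit) mult_left_mono)
  also have "\<dots> = \<delta> ^ Suc \<tau> * Q 0 + 2 * S \<tau> * (\<delta> / (1 - \<delta>) + \<delta>)"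
    by (simp add: algebra_simps)
  also have "\<delta> / (1 - \<delta>) + \<delta> = 1 / (1 - \<delta>) - (1 - \<delta>)"
    using d by (simp add: field_simps)
  also have "\<delta> ^ Suc \<tau> * Q 0 + 2 * S \<tau> * (1 / (1 - \<delta>) - (1 - \<delta>)) \<le> \<delta> ^ Suc \<tau> * Q 0 + 2 * S \<tau> * (1 / (1 - \<delta>))"
  proof -
    have "2 * S \<tau> * (1 / (1 - \<delta>) - (1 - \<delta>)) \<le> 2 * S \<tau> * (1 / (1 - \<delta>))"
      by (rule mult_left_mono) (use d Sp[of \<tau>] in auto)
    then show ?thesis by simp
  qed
  also have "\<delta> ^ Suc \<tau> * Q 0 + 2 * S \<tau> * (1 / (1 - \<delta>)) \<le> \<delta> ^ Suc \<tau> * Q 0 + 2 * S (Suc \<tau>) / (1 - \<delta>)"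
    using Sm[of \<tau>] d by (simp add: divide_right_mono)
  finally show ?case by simp
qed

theorem mainTheorem13:
  fixes E :: "('v \<times> 'v) set" and s d :: 'v and P1 P2 :: "'v list"
    and l :: "'v \<Rightarrow> real" and \<delta> :: real
    and f b :: "nat \<Rightarrow> 'v \<Rightarrow> real" and p :: "nat \<Rightarrow> 'v \<Rightarrow> 'v \<Rightarrow> real"
    and m n L :: nat and T1 :: real and t :: nat
  assumes G: "two_parallel_paths E s d P1 P2"
    and m_def: "m = length P1 - 1" and n_def: "n = length P2 - 1" and L_def: "L = max m n"
    and mn: "m < n"
    and delta: "0 < \<delta>" "\<delta> < 1"
    and leak: "\<forall>v. l v = 0"
    and dyn: "ant_dynamics E s d l \<delta> f b p"
    and p0: "\<forall>(u,v)\<in>E. p 0 u v > 0"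
    and fs_pos: "\<forall>t. f t s > 0" and fs_mono: "mono (\<lambda>t. f t s)"
    and bd_pos: "\<forall>t. b t d > 0" and bd_mono: "mono (\<lambda>t. b t d)"
    and f0: "\<forall>v \<in> (set P1 \<union> set P2) - {s, d}. 0 \<le> f 0 v \<and> f 0 v \<le> f 0 s"
    and b0: "\<forall>v \<in> (set P1 \<union> set P2) - {s, d}. 0 \<le> b 0 v \<and> b 0 v \<le> b 0 d"
    and T1_def: "T1 = Max ((\<lambda>(u,v). ln (p 0 u v / (f 0 s + b 0 d)) / ln (1 / \<delta>)) ` E)"
    and t_ge: "real t \<ge> real L + max 0 T1"
  shows "r_s p s P1 P2 (t + 1) \<ge>
           r_min p s d P1 P2 t *
             (1 + (1 - \<delta>) * (b (t + 1 - m) d - b (t + 1 - n) d) / (6 * (f t s + b t d)))"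
proof -
  have dynf: "\<And>t v. v \<noteq> s \<Longrightarrow> f (Suc t) v = (\<Sum>z\<in>{z. (z,v) \<in> E}. fflow E p f t z v)"
    using dyn leak unfolding ant_dynamics_def by simp
  have dynb: "\<And>t u. u \<noteq> d \<Longrightarrow> b (Suc t) u = (\<Sum>z\<in>{z. (u,z) \<in> E}. bflow E p b t u z)"
    using dyn leak unfolding ant_dynamics_def by simp
  have dynp: "\<And>t u v. (u,v) \<in> E \<Longrightarrow>
        p (Suc t) u v = \<delta> * (p t u v + fflow E p f t u v + bflow E p b t u v)"
    using dyn unfolding ant_dynamics_def by blast
  interpret A: ant0 E s d P1 P2 \<delta> f b p
    apply unfold_locales
    apply (rule G)
    apply (rule delta(1))
    apply (rule delta(2))
    apply (erule dynf)
    apply (erule dynb)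
    apply (erule dynp)
    subgoal for u v using p0 by auto
    subgoal for t using fs_pos by auto
    subgoal for t using bd_pos by auto
    apply (rule bd_mono)
    subgoal for v using f0 by auto
    subgoal for v using b0 by auto
    done
  interpret B: ant0 E s d P2 P1 \<delta> f b p by (rule ant0_sym) (rule A.ant0_axioms)
  note bq1 = tpp_basic[OF G] and bq2 = tpp_basic[OF tpp_sym[OF G]]
  have lt: "length P1 < length P2" using mn m_def n_def bq1 bq2 by simp
  define s1 where "s1 = P1!1"
  define s2 where "s2 = P2!1"
  define d1 where "d1 = P1!(length P1 - 2)"
  define d2 where "d2 = P2!(length P2 - 2)"
  have out_s: "{z. (s,z) \<in> E} = {s1, s2}" using tpp_out_s[OF G] s1_def s2_def by simp
  have in_d: "{z. (z,d) \<in> E} = {d1, d2}" using tpp_in_d[OF G] d1_def d2_def by simp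
  have s12: "s1 \<noteq> s2" using tpp_distinct[OF G lt] s1_def s2_def by simp
  have d12: "d1 \<noteq> d2" using tpp_distinct[OF G lt] d1_def d2_def by simp
  have e_s1: "(s, s1) \<in> E" and e_s2: "(s, s2) \<in> E" using out_s by auto
  have e_d1: "(d1, d) \<in> E" and e_d2: "(d2, d) \<in> E" using in_d by auto
  have m1: "m \<ge> 1" using m_def bq1 by simp
  have tL: "real L \<le> real t" using t_ge by simp
  then have tn: "n \<le> t" using L_def by simp
  define S where "S \<tau> = f \<tau> s + b \<tau> d" for \<tau>
  have Spos: "S \<tau> > 0" for \<tau> using fs_pos bd_pos S_def by (simp add: add_pos_pos)
  have Smono: "S \<tau> \<le> S (Suc \<tau>)" for \<tau>
    using fs_mono bd_mono unfolding S_def mono_def by (simp add: add_mono)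
  have Smono': "\<tau> \<le> \<tau>' \<Longrightarrow> S \<tau> \<le> S \<tau>'" for \<tau> \<tau>'
    using fs_mono bd_mono unfolding S_def mono_def by (simp add: add_mono)
  have ff1: "fflow E p f \<tau> s s1 = f \<tau> s * p \<tau> s s1 / (p \<tau> s s1 + p \<tau> s s2)" for \<tau>
    unfolding fflow_def out_s using s12 by simp
  have ff2: "fflow E p f \<tau> s s2 = f \<tau> s * p \<tau> s s2 / (p \<tau> s s1 + p \<tau> s s2)" for \<tau>
    unfolding fflow_def out_s using s12 by simp
  have hh1: "A.hh \<tau> = b \<tau> d * p \<tau> d1 d / (p \<tau> d1 d + p \<tau> d2 d)" for \<tau>
    unfolding A.hh_def bflow_def in_d using d12 d1_def by simp
  have hh2: "B.hh \<tau> = b \<tau> d * p \<tau> d2 d / (p \<tau> d1 d + p \<tau> d2 d)" for \<tau>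
    unfolding B.hh_def bflow_def in_d using d12 d2_def by simp
  define Q where "Q \<tau> = p \<tau> s s1 + p \<tau> s s2" for \<tau>
  have Qstep: "Q (Suc \<tau>) \<le> \<delta> * Q \<tau> + 2 * \<delta> * S \<tau>" for \<tau>
  proof -
    have x: "p \<tau> s s1 > 0" "p \<tau> s s2 > 0" using A.ppos e_s1 e_s2 by auto
    have fsum: "fflow E p f \<tau> s s1 + fflow E p f \<tau> s s2 = f \<tau> s"
      unfolding ff1 ff2 using x by (simp add: add_divide_distrib[symmetric] distrib_left[symmetric])
    have b1: "bflow E p b \<tau> s s1 \<le> b \<tau> d" "bflow E p b \<tau> s s2 \<le> b \<tau> d"
      using A.bflow_bd e_s1 e_s2 by auto
    have "Q (Suc \<tau>) = \<delta> * (Q \<tau> + (fflow E p f \<tau> s s1 + fflow E p f \<tau> s s2) + bflow E p b \<tau> s s1 + bflow E p b \<tau> s s2)"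
      unfolding Q_def using dynp[OF e_s1] dynp[OF e_s2] by (simp add: algebra_simps)
    also have "\<dots> \<le> \<delta> * (Q \<tau> + f \<tau> s + b \<tau> d + b \<tau> d)"
      using fsum b1 delta by (intro mult_left_mono) auto
    also have "\<dots> \<le> \<delta> * Q \<tau> + 2 * \<delta> * S \<tau>"
    proof -
      have "0 \<le> \<delta> * f \<tau> s" using delta fs_pos by (simp add: less_imp_le)
      then show ?thesis unfolding S_def by (simp add: algebra_simps)
    qed
    finally show ?thesis .
  qed
  have Qb: "Q t \<le> \<delta> ^ t * Q 0 + 2 * S t / (1 - \<delta>)"
    by (rule Q_bound[where Q=Q and S=S and \<delta>=\<delta>, OF delta Qstep Smono]) (simp add: Spos less_imp_le)
  have finT: "finite ((\<lambda>(u,v). ln (p 0 u v / (f 0 s + b 0 d)) / ln (1 / \<delta>)) ` E)"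
    using bq1 by simp
  have T1e: "\<delta> ^ t * p 0 u v \<le> S 0" if e: "(u,v) \<in> E" for u v
  proof (rule T1_bound[OF delta])
    show "p 0 u v > 0" using A.ppos[OF e] .
    show "S 0 > 0" using Spos .
    have "ln (p 0 u v / S 0) / ln (1 / \<delta>) \<le> T1"
      unfolding T1_def S_def using finT e by (intro Max_ge) (auto intro: rev_image_eqI)
    also have "T1 \<le> real t" using t_ge by simp
    finally show "ln (p 0 u v / S 0) / ln (1 / \<delta>) \<le> real t" .
  qed
  have Qt: "Q t \<le> 4 * S t / (1 - \<delta>)"
  proof -
    have "\<delta> ^ t * Q 0 \<le> 2 * S 0" using T1e[OF e_s1] T1e[OF e_s2] unfolding Q_def by (simp add: algebra_simps)
    also have "\<dots> \<le> 2 * S t" using Smono'[of 0 t] by simp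
    also have "\<dots> \<le> 2 * S t / (1 - \<delta>)"
    proof -
      have "1 \<le> 1 / (1 - \<delta>)" using delta by simp
      then have "2 * S t * 1 \<le> 2 * S t * (1 / (1 - \<delta>))" using Spos[of t] by (intro mult_left_mono) auto
      then show ?thesis by simp
    qed
    finally have "\<delta> ^ t * Q 0 \<le> 2 * S t / (1 - \<delta>)" .
    then have "Q t \<le> 2 * S t / (1 - \<delta>) + 2 * S t / (1 - \<delta>)" using Qb by simp
    then show ?thesis by (simp add: add_divide_distrib[symmetric])
  qed
  define M where "M = (\<lambda>i. r_s p s P1 P2 (t - i)) ` {..<n} \<union> (\<lambda>i. r_d p d P1 P2 (t - i)) ` {..<n}"
  have Lmn: "max (length P1 - 1) (length P2 - 1) = n" using m_def n_def mn by simp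
  have rmin_def': "r_min p s d P1 P2 t = Min M" unfolding r_min_def M_def Let_def Lmn ..
  have rs_pos: "r_s p s P1 P2 \<tau> > 0" for \<tau>
    unfolding r_s_def using A.ppos[OF e_s1] A.ppos[OF e_s2] s1_def s2_def by simp
  have rd_pos: "r_d p d P1 P2 \<tau> > 0" for \<tau>
    unfolding r_d_def using A.ppos[OF e_d1] A.ppos[OF e_d2] d1_def d2_def by simp
  have finM: "finite M" unfolding M_def by simp
  have n0: "0 < n" using mn by simp
  have M0: "r_s p s P1 P2 t \<in> M" unfolding M_def using n0 by (auto intro: rev_image_eqI[of 0])
  have M1: "r_d p d P1 P2 (t + 1 - m) \<in> M"
  proof -
    have "t - (m - 1) = t + 1 - m" using m1 by simp
    then show ?thesis unfolding M_def using mn m1 by (auto intro!: rev_image_eqI[of "m - 1"])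
  qed
  have M2: "r_d p d P1 P2 (t + 1 - n) \<in> M"
  proof -
    have "t - (n - 1) = t + 1 - n" using n0 by simp
    then show ?thesis unfolding M_def using n0 by (auto intro!: rev_image_eqI[of "n - 1"])
  qed
  define r where "r = r_min p s d P1 P2 t"
  have r_le: "r \<le> r_s p s P1 P2 t" "r \<le> r_d p d P1 P2 (t + 1 - m)" "r \<le> r_d p d P1 P2 (t + 1 - n)"
    unfolding r_def rmin_def' using finM M0 M1 M2 by auto
  have rpos: "r > 0"
  proof -
    have "M \<noteq> {}" using M0 by auto
    then have "Min M \<in> M" using finM by simp
    moreover have "\<forall>z\<in>M. z > 0" unfolding M_def using rs_pos rd_pos by auto
    ultimately show ?thesis unfolding r_def rmin_def' by auto
  qed
  define t1 where "t1 = t + 1 - m"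
  define t2 where "t2 = t + 1 - n"
  have t1e: "t - (length P1 - 2) = t1" using t1_def m_def m1 tn mn by simp
  have t2e: "t - (length P2 - 2) = t2" using t2_def n_def tn mn by simp
  have t1le: "length P1 - 2 \<le> t" "length P2 - 2 \<le> t" using m_def n_def tn mn by auto
  have bf1: "bflow E p b t s s1 = b t1 d * p t1 d1 d / (p t1 d1 d + p t1 d2 d)"
    using A.prop_s[OF t1le(1)] t1e hh1 s1_def by simp
  have bf2: "bflow E p b t s s2 = b t2 d * p t2 d2 d / (p t2 d1 d + p t2 d2 d)"
    using B.prop_s[OF t1le(2)] t2e hh2 s2_def by simp
  have xpos: "p t s s1 > 0" "p t s s2 > 0" using A.ppos e_s1 e_s2 by auto
  have Xpos: "p t1 d1 d > 0" "p t1 d2 d > 0" "p t2 d1 d > 0" "p t2 d2 d > 0"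
    using A.ppos e_d1 e_d2 by auto
  have rx: "r * p t s s2 \<le> p t s s1"
    using r_le(1) xpos unfolding r_s_def s1_def s2_def by (simp add: le_divide_eq)
  have r1: "r * p t1 d2 d \<le> p t1 d1 d"
    using r_le(2) Xpos unfolding r_d_def d1_def d2_def t1_def by (simp add: le_divide_eq)
  have r2: "r * p t2 d2 d \<le> p t2 d1 d"
    using r_le(3) Xpos unfolding r_d_def d1_def d2_def t2_def by (simp add: le_divide_eq)
  have t21: "t2 \<le> t1" "t2 \<le> t" using t1_def t2_def mn by auto
  have B12: "b t2 d \<le> b t1 d" using bd_mono t21 by (simp add: mono_def)
  have FB: "f t s + b t2 d \<le> S t" using bd_mono t21 unfolding S_def by (simp add: mono_def)
  have main: "(p t s s1 + f t s * p t s s1 / (p t s s1 + p t s s2) + b t1 d * p t1 d1 d / (p t1 d1 d + p t1 d2 d)) /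
      (p t s s2 + f t s * p t s s2 / (p t s s1 + p t s s2) + b t2 d * p t2 d2 d / (p t2 d1 d + p t2 d2 d))
      \<ge> r * (1 + (1 - \<delta>) * (b t1 d - b t2 d) / (6 * S t))"
    by (rule alg_main[OF xpos Xpos(1,2) Xpos(3,4) rpos _ _ B12 rx r1 r2 delta])
       (use fs_pos bd_pos less_imp_le Qt FB in \<open>auto simp: Q_def\<close>)
  have "r_s p s P1 P2 (t + 1) = (\<delta> * (p t s s1 + f t s * p t s s1 / (p t s s1 + p t s s2) + b t1 d * p t1 d1 d / (p t1 d1 d + p t1 d2 d))) /
      (\<delta> * (p t s s2 + f t s * p t s s2 / (p t s s1 + p t s s2) + b t2 d * p t2 d2 d / (p t2 d1 d + p t2 d2 d)))"
    unfolding r_s_def using dynp[OF e_s1, of t] dynp[OF e_s2, of t] ff1 ff2 bf1 bf2 s1_def s2_def by simp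
  also have "\<dots> = (p t s s1 + f t s * p t s s1 / (p t s s1 + p t s s2) + b t1 d * p t1 d1 d / (p t1 d1 d + p t1 d2 d)) /
      (p t s s2 + f t s * p t s s2 / (p t s s1 + p t s s2) + b t2 d * p t2 d2 d / (p t2 d1 d + p t2 d2 d))"
    using delta by simp
  finally show ?thesis using main unfolding r_def S_def t1_def t2_def by simp
qed

end
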